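(* For every $n>0$, there are finite alphabets $\Sigma_I,\Sigma_O$ and a language $L_n\subseteq(\Sigma_I\times\Sigma_O)^\omega$ recognized by a finitary Büchi automaton with costs $\mathcal{A}_n$ with $n+2$ states such that an optimal winning strategy for Player $O$ in $\Gamma_{f_0}(L_n)$ has cost $n$, but an optimal winning strategy for Player $O$ in $\Gamma_{f_1}(L_n)$ has cost $1$.
   Context: A parity automaton with costs is a tuple $\mathcal{A}=(Q,\Sigma,q_I,\delta,\Omega,\mathrm{Cst})$ with a finite set $Q$ of states, a finite alphabet $\Sigma$, an initial state $q_I$, a deterministic complete transition function $\delta\colon Q\times\Sigma\to Q$, a coloring $\Omega\colon Q\to\mathbb{N}$, and a cost function $\mathrm{Cst}$ assigning to every transition $(q,a,\delta(q,a))$ either $\epsilon$ or $\mathtt{i}$ (increment-transition). A finitary Büchi automaton is one in which every transition is an increment-transition and $\Omega(Q)=\{1,2\}$. The run on $a_0a_1\cdots$ is $(q_0,a_0,q_1)(q_1,a_1,q_2)\cdots$ with $q_0=q_I$, $q_{j+1}=\delta(q_j,a_j)$; the cost of a finite run is its number of increment-transitions. For odd $c$, $\mathrm{Ans}(c)=\{c'\in\Omega(Q)\mid c'>c,\ c'\text{ even}\}$. For an infinite run $\rho$ and $n$, $\mathrm{Cor}(\rho,n)=0$ if $\Omega(q_n)$ is even, and otherwise it is the minimal cost of $(q_n,a_n,q_{n+1})\cdots(q_{n'-1},a_{n'-1},q_{n'})$ over $n'>n$ with $\Omega(q_{n'})\in\mathrm{Ans}(\Omega(q_n))$ ($\min\emptyset=\infty$).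 The run is accepting if $\limsup_n\mathrm{Cor}(\rho,n)<\infty$; $L(\mathcal{A})$ is the set of infinite words whose run is accepting. A delay function is a map $f\colon\mathbb{N}\to\mathbb{N}\setminus\{0\}$; for $k\ge0$, $f_k$ denotes the delay function with $f_k(0)=k+1$ and $f_k(i)=1$ for $i>0$. For $L\subseteq(\Sigma_I\times\Sigma_O)^\omega$, the delay game $\Gamma_f(L)$ is played in rounds $i=0,1,2,\ldots$: in round $i$, Player $I$ picks $u_i\in\Sigma_I^{f(i)}$, then Player $O$ picks $v_i\in\Sigma_O$. Player $O$ wins the play if the outcome, i.e., the word over $\Sigma_I\times\Sigma_O$ pairing $u_0u_1u_2\cdots$ and $v_0v_1v_2\cdots$ letterwise, is in $L$. A strategy for Player $O$ is a map $\tau_O\colon\Sigma_I^*\to\Sigma_O$; a play is consistent with $\tau_O$ if $v_i=\tau_O(u_0\cdots u_i)$ for all $i$; $\tau_O$ is winning if every consistent play is won by Player $O$. For a winning strategy $\tau_O$ in $\Gamma_f(L(\mathcal{A}))$, its cost is $\mathrm{Cst}_\mathcal{A}(\tau_O)=\sup_w\limsup_{n\to\infty}\mathrm{Cor}(\rho(w),n)$, where $w$ ranges over outcomes of plays consistent with $\tau_O$ and $\rho(w)$ is the run of $\mathcal{A}$ on $w$; a winning strategy is optimal if its cost is minimal among all winning strategies of Player $O$ in $\Gamma_f(L(\mathcal{A}))$. *)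

theory Defs
  imports Main "HOL-Library.Extended_Nat" "HOL-Library.Liminf_Limsup"
begin

text \<open>The cost function is represented as a predicate: cst q a = True iff the
  transition (q, a, delta q a) is an increment-transition; False means epsilon.\<close>
record ('q, 'a) pac =
  states :: "'q set"
  alph   :: "'a set"
  init   :: 'q
  trans  :: "'q \<Rightarrow> 'a \<Rightarrow> 'q"
  col    :: "'q \<Rightarrow> nat"
  cst    :: "'q \<Rightarrow> 'a \<Rightarrow> bool"

definition wf_pac :: "('q, 'a) pac \<Rightarrow> bool" where
  "wf_pac A \<longleftrightarrow> finite (states A) \<and> finite (alph A) \<and> init A \<in> states A \<and>
     (\<forall>q\<in>states A. \<forall>a\<in>alph A. trans A q a \<in> states A)"

definition finitary_buchi :: "('q, 'a) pac \<Rightarrow> bool" where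
  "finitary_buchi A \<longleftrightarrow> wf_pac A \<and> (\<forall>q\<in>states A. \<forall>a\<in>alph A. cst A q a) \<and>
     col A ` states A = {1, 2}"

primrec run :: "('q, 'a) pac \<Rightarrow> (nat \<Rightarrow> 'a) \<Rightarrow> nat \<Rightarrow> 'q" where
  "run A w 0 = init A"
| "run A w (Suc n) = trans A (run A w n) (w n)"

definition seg_cost :: "('q, 'a) pac \<Rightarrow> (nat \<Rightarrow> 'a) \<Rightarrow> nat \<Rightarrow> nat \<Rightarrow> nat" where
  "seg_cost A w n n' = card {j \<in> {n..<n'}. cst A (run A w j) (w j)}"

definition Ans :: "('q, 'a) pac \<Rightarrow> nat \<Rightarrow> nat set" where
  "Ans A c = {c' \<in> col A ` states A. c < c' \<and> even c'}"

definition Cor :: "('q, 'a) pac \<Rightarrow> (nat \<Rightarrow> 'a) \<Rightarrow> nat \<Rightarrow> enat" where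
  "Cor A w n = (if even (col A (run A w n)) then 0
     else (INF n' \<in> {n'. n < n' \<and> col A (run A w n') \<in> Ans A (col A (run A w n))}.
             enat (seg_cost A w n n')))"

definition accepting :: "('q, 'a) pac \<Rightarrow> (nat \<Rightarrow> 'a) \<Rightarrow> bool" where
  "accepting A w \<longleftrightarrow> limsup (Cor A w) < \<infinity>"

definition lang :: "('q, 'a) pac \<Rightarrow> (nat \<Rightarrow> 'a) set" where
  "lang A = {w. (\<forall>n. w n \<in> alph A) \<and> accepting A w}"

definition fk :: "nat \<Rightarrow> nat \<Rightarrow> nat" where
  "fk k i = (if i = 0 then k + 1 else 1)"

text \<open>Length of u_0 ... u_i.\<close>
definition pref_len :: "(nat \<Rightarrow> nat) \<Rightarrow> nat \<Rightarrow> nat" where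
  "pref_len f i = (\<Sum>j\<le>i. f j)"

text \<open>A play of Gamma_f consistent with tau is determined by the input word
  alpha = u_0 u_1 ...; its outcome pairs alpha n with v_n = tau(u_0...u_n).\<close>
definition outcome :: "(nat \<Rightarrow> nat) \<Rightarrow> ('i list \<Rightarrow> 'o) \<Rightarrow> (nat \<Rightarrow> 'i) \<Rightarrow> nat \<Rightarrow> 'i \<times> 'o" where
  "outcome f \<tau> \<alpha> = (\<lambda>n. (\<alpha> n, \<tau> (map \<alpha> [0..<pref_len f n])))"

definition strategy :: "'i set \<Rightarrow> 'o set \<Rightarrow> ('i list \<Rightarrow> 'o) \<Rightarrow> bool" where
  "strategy SI SO \<tau> \<longleftrightarrow> (\<forall>x\<in>lists SI. \<tau> x \<in> SO)"

definition winning :: "(nat \<Rightarrow> nat) \<Rightarrow> 'i set \<Rightarrow> 'o set \<Rightarrow> (nat \<Rightarrow> 'i \<times> 'o) set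
    \<Rightarrow> ('i list \<Rightarrow> 'o) \<Rightarrow> bool" where
  "winning f SI SO L \<tau> \<longleftrightarrow> strategy SI SO \<tau> \<and>
     (\<forall>\<alpha>. (\<forall>n. \<alpha> n \<in> SI) \<longrightarrow> outcome f \<tau> \<alpha> \<in> L)"

definition strat_cost :: "('q, 'i \<times> 'o) pac \<Rightarrow> (nat \<Rightarrow> nat) \<Rightarrow> 'i set
    \<Rightarrow> ('i list \<Rightarrow> 'o) \<Rightarrow> enat" where
  "strat_cost A f SI \<tau> = (SUP \<alpha> \<in> {\<alpha>. \<forall>n. \<alpha> n \<in> SI}. limsup (Cor A (outcome f \<tau> \<alpha>)))"

definition optimal :: "('q, 'i \<times> 'o) pac \<Rightarrow> (nat \<Rightarrow> nat) \<Rightarrow> 'i set \<Rightarrow> 'o set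
    \<Rightarrow> ('i list \<Rightarrow> 'o) \<Rightarrow> bool" where
  "optimal A f SI SO \<tau> \<longleftrightarrow> winning f SI SO (lang A) \<tau> \<and>
     (\<forall>\<tau>'. winning f SI SO (lang A) \<tau>' \<longrightarrow> strat_cost A f SI \<tau> \<le> strat_cost A f SI \<tau>')"

end

theory Submission
  imports Defs
begin

definition Tr :: "nat \<Rightarrow> nat \<Rightarrow> nat \<times> nat \<Rightarrow> nat" where
  "Tr n q x = (if q = 0 then n + (if snd x = 0 then 0 else 1)
     else if n \<le> q then (if fst x = q - n then 0 else n - 1) else q - 1)"

definition Aut :: "nat \<Rightarrow> (nat, nat \<times> nat) pac" where
  "Aut n = \<lparr>states = {0..n+1}, alph = {0,1::nat} \<times> {0,1::nat}, init = 0,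
     trans = Tr n, col = (\<lambda>q. if q = 0 then 2 else 1), cst = (\<lambda>_ _. True)\<rparr>"

lemma Aut_simps[simp]: "states (Aut n) = {0..n+1}" "alph (Aut n) = {0,1} \<times> {0,1}"
  "init (Aut n) = 0" "trans (Aut n) = Tr n" "col (Aut n) = (\<lambda>q. if q = 0 then 2 else 1)"
  "cst (Aut n) = (\<lambda>_ _. True)"
  by (simp_all add: Aut_def)

lemma col_img: "col (Aut n) ` states (Aut n) = {1,2}"
proof
  show "col (Aut n) ` states (Aut n) \<subseteq> {1,2}" by auto
  have "2 \<in> col (Aut n) ` states (Aut n)" by (rule image_eqI[of _ _ 0]) auto
  moreover have "1 \<in> col (Aut n) ` states (Aut n)" by (rule image_eqI[of _ _ 1]) auto
  ultimately show "{1,2} \<subseteq> col (Aut n) ` states (Aut n)" by auto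
qed

lemma Cor_eq: "Cor (Aut n) w m = (if run (Aut n) w m = 0 then 0 else
   (INF m'\<in>{m'. m < m' \<and> run (Aut n) w m' = 0}. enat (m' - m)))"
proof -
  have A: "Ans (Aut n) (Suc 0) = {2}" unfolding Ans_def col_img by auto
  have S: "seg_cost (Aut n) w m m' = m' - m" for m' unfolding seg_cost_def
    using card_atLeastLessThan[of m m'] by (simp add: atLeastLessThan_def atLeast_def lessThan_def Collect_conj_eq)
  show ?thesis unfolding Cor_def apply (simp add: A S) apply (intro impI arg_cong[where f=Inf] image_cong) by auto
qed

lemma chain: "run (Aut n) w m = q \<Longrightarrow> q < n \<Longrightarrow> j \<le> q \<Longrightarrow> run (Aut n) w (m+j) = q - j"
proof (induction j)
  case 0 then show ?case by simp
next
  case (Suc j)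
  then have "run (Aut n) w (m+j) = q - j" by simp
  with Suc.prems show ?case by (simp add: Tr_def)
qed

lemma reach: assumes "n > 0" "run (Aut n) w m \<noteq> 0"
  shows "\<exists>k. 0 < k \<and> k \<le> n \<and> run (Aut n) w (m+k) = 0"
proof (cases "run (Aut n) w m < n")
  case True
  then show ?thesis using chain[OF refl True, of "run (Aut n) w m"] assms by (intro exI[of _ "run (Aut n) w m"]) auto
next
  case False
  then have r1: "run (Aut n) w (Suc m) = 0 \<or> run (Aut n) w (Suc m) = n - 1"
    using assms by (simp add: Tr_def)
  show ?thesis
  proof (cases "run (Aut n) w (Suc m) = 0")
    case True then show ?thesis using assms by (intro exI[of _ 1]) auto
  next
    case F: False
    with r1 have r: "run (Aut n) w (Suc m) = n - 1" by simp
    have "run (Aut n) w (Suc m + (n-1)) = 0" using chain[OF r, of "n-1"] assms by simp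
    then show ?thesis using assms by (intro exI[of _ n]) auto
  qed
qed

lemma Cor_le: "run (Aut n) w (m+k) = 0 \<Longrightarrow> 0 < k \<Longrightarrow> Cor (Aut n) w m \<le> enat k"
  unfolding Cor_eq by (auto intro!: INF_lower2[of "m+k"])

lemma Cor_le_n: assumes "n > 0" shows "Cor (Aut n) w m \<le> enat n"
proof (cases "run (Aut n) w m = 0")
  case True then show ?thesis by (simp add: Cor_eq)
next
  case False
  then obtain k where k: "0 < k" "k \<le> n" "run (Aut n) w (m+k) = 0" using reach[OF assms] by blast
  then have "Cor (Aut n) w m \<le> enat k" by (intro Cor_le)
  then show ?thesis using k(2) order_trans by fastforce
qed

lemma Cor_ge: "run (Aut n) w m \<noteq> 0 \<Longrightarrow> (\<And>j. 0 < j \<Longrightarrow> j < k \<Longrightarrow> run (Aut n) w (m+j) \<noteq> 0)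
   \<Longrightarrow> enat k \<le> Cor (Aut n) w m"
  unfolding Cor_eq if_not_P
proof (rule INF_greatest, clarify)
  fix m' assume "\<And>j. 0 < j \<Longrightarrow> j < k \<Longrightarrow> run (Aut n) w (m+j) \<noteq> 0" "m < m'" "run (Aut n) w m' = 0"
  then have "\<not> m' - m < k" by (metis add_diff_inverse_nat order.asym zero_less_diff)
  then show "enat k \<le> enat (m' - m)" by simp
qed

lemma limsup_le_n: "n > 0 \<Longrightarrow> limsup (Cor (Aut n) w) \<le> enat n"
  by (rule Limsup_bounded) (simp add: Cor_le_n)

lemma limsup_ge: assumes "\<And>N. \<exists>m\<ge>N. c \<le> X m" shows "c \<le> limsup (X :: nat \<Rightarrow> enat)"
  unfolding limsup_INF_SUP
proof (rule INF_greatest)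
  fix N obtain m where "m \<ge> N" "c \<le> X m" using assms by blast
  then show "c \<le> (SUP m\<in>{N..}. X m)" by (intro SUP_upper2[of m]) auto
qed

lemma zero_often: "n > 0 \<Longrightarrow> \<exists>m\<ge>N. run (Aut n) w m = 0"
  using reach[of n w N] by (cases "run (Aut n) w N = 0") (auto intro: le_add1)

lemma limsup_ge1: assumes "n > 0" shows "1 \<le> limsup (Cor (Aut n) w)"
proof (rule limsup_ge)
  fix N obtain m where m: "m \<ge> N" "run (Aut n) w m = 0" using zero_often[OF assms] by blast
  have "run (Aut n) w (Suc m) \<noteq> 0" using m assms by (simp add: Tr_def)
  then have "enat 1 \<le> Cor (Aut n) w (Suc m)" by (intro Cor_ge) auto
  then show "\<exists>m\<ge>N. 1 \<le> Cor (Aut n) w m" using m by (intro exI[of _ "Suc m"]) (auto simp: one_enat_def)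
qed

lemma pref0: "pref_len (fk 0) m = Suc m"
  unfolding pref_len_def fk_def by (induction m) auto

lemma pref1: "pref_len (fk 1) m = m + 2"
  unfolding pref_len_def fk_def by (induction m) auto

lemma outcome_alph: fixes \<tau> :: "nat list \<Rightarrow> nat" and \<alpha> :: "nat \<Rightarrow> nat" assumes "strategy {0,1} {0,1} \<tau>" "\<forall>m. \<alpha> m \<in> {0,1::nat}"
  shows "outcome f \<tau> \<alpha> m \<in> alph (Aut n)"
proof -
  have "map \<alpha> [0..<k] \<in> lists {0,1}" for k using assms(2) by (induct k) auto
  then have "map \<alpha> [0..<pref_len f m] \<in> lists {0,1}" .
  then have "\<tau> (map \<alpha> [0..<pref_len f m]) \<in> {0,1}" using assms(1) unfolding strategy_def by blast
  moreover have "\<alpha> m \<in> {0,1}" using assms(2) by blast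
  ultimately show ?thesis unfolding outcome_def by (simp only: Aut_simps mem_Times_iff fst_conv snd_conv)
qed

lemma winning_all: fixes \<tau> :: "nat list \<Rightarrow> nat" assumes "n > 0" "strategy {0,1} {0,1} \<tau>"
  shows "winning f {0,1} {0,1} (lang (Aut n)) \<tau>"
proof -
  have "outcome f \<tau> \<alpha> \<in> lang (Aut n)" if a: "\<forall>n. \<alpha> n \<in> {0,1}" for \<alpha> :: "nat \<Rightarrow> nat"
  proof -
    have 1: "\<forall>m. outcome f \<tau> \<alpha> m \<in> alph (Aut n)" using outcome_alph[OF assms(2) a] by blast
    have "limsup (Cor (Aut n) (outcome f \<tau> \<alpha>)) \<le> enat n" by (rule limsup_le_n[OF assms(1)])
    then have 2: "limsup (Cor (Aut n) (outcome f \<tau> \<alpha>)) < \<infinity>"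
      using le_less_trans by (metis enat_ord_code(4))
    show ?thesis unfolding lang_def accepting_def using 1 2 by blast
  qed
  then show ?thesis unfolding winning_def using assms(2) by blast
qed

lemma cost_le_n: fixes \<tau> :: "nat list \<Rightarrow> nat" assumes "n > 0" shows "strat_cost (Aut n) f {0,1} \<tau> \<le> enat n"
  unfolding strat_cost_def using limsup_le_n[OF assms] by (intro SUP_least) auto

lemma cost_ge1: fixes \<tau> :: "nat list \<Rightarrow> nat" assumes "n > 0" shows "1 \<le> strat_cost (Aut n) f {0,1} \<tau>"
  unfolding strat_cost_def using limsup_ge1[OF assms]
  by (intro SUP_upper2[of "\<lambda>_. 0"]) auto

definition tau1 :: "nat list \<Rightarrow> nat" where
  "tau1 xs = (if xs = [] then 0 else last xs)"

lemma tau1_strat: "strategy {0,1} {0,1} tau1"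
  unfolding strategy_def tau1_def by auto

lemma run1: assumes "\<forall>m. \<alpha> m \<in> {0,1::nat}"
  shows "run (Aut n) (outcome (fk 1) tau1 \<alpha>) m = 0 \<or> run (Aut n) (outcome (fk 1) tau1 \<alpha>) m = n + \<alpha> m"
proof (induction m)
  case 0 then show ?case by simp
next
  case (Suc m)
  have o: "outcome (fk 1) tau1 \<alpha> m = (\<alpha> m, \<alpha> (Suc m))"
    unfolding outcome_def pref1 tau1_def by simp
  have a: "\<alpha> (Suc m) \<in> {0,1}" "\<alpha> m \<in> {0,1}" using assms by auto
  have "run (Aut n) (outcome (fk 1) tau1 \<alpha>) (Suc m) = Tr n (run (Aut n) (outcome (fk 1) tau1 \<alpha>) m) (\<alpha> m, \<alpha> (Suc m))"
    by (simp only: run.simps Aut_simps o)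
  with Suc show ?case using a by (auto simp: Tr_def)
qed

lemma cor1: assumes "n > 0" "\<forall>m. \<alpha> m \<in> {0,1::nat}"
  shows "Cor (Aut n) (outcome (fk 1) tau1 \<alpha>) m \<le> 1"
proof -
  let ?w = "outcome (fk 1) tau1 \<alpha>"
  show ?thesis
  proof (cases "run (Aut n) ?w m = 0")
    case True then show ?thesis by (simp add: Cor_eq)
  next
    case False
    then have r: "run (Aut n) ?w m = n + \<alpha> m" using run1[OF assms(2), where n=n and m=m] by auto
    have o: "?w m = (\<alpha> m, \<alpha> (Suc m))"
      unfolding outcome_def pref1 tau1_def by simp
    have "run (Aut n) ?w (m+1) = Tr n (run (Aut n) ?w m) (\<alpha> m, \<alpha> (Suc m))"
      by (simp only: run.simps Aut_simps o Suc_eq_plus1[symmetric])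
    then have "run (Aut n) ?w (m+1) = 0" using r assms by (simp add: Tr_def)
    then have "Cor (Aut n) ?w m \<le> enat 1" by (intro Cor_le) auto
    then show ?thesis by (simp add: one_enat_def)
  qed
qed

lemma cost1: assumes "n > 0" shows "strat_cost (Aut n) (fk 1) {0,1} tau1 = 1"
proof (rule antisym)
  show "1 \<le> strat_cost (Aut n) (fk 1) {0,1} tau1" by (rule cost_ge1[OF assms])
  have "limsup (Cor (Aut n) (outcome (fk 1) tau1 \<alpha>)) \<le> 1" if "\<forall>m. \<alpha> m \<in> {0,1::nat}" for \<alpha>
    by (rule Limsup_bounded, rule always_eventually) (use cor1[OF assms that] in blast)
  then show "strat_cost (Aut n) (fk 1) {0,1} tau1 \<le> 1"
    unfolding strat_cost_def by (intro SUP_least) blast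
qed

fun adv :: "(nat list \<Rightarrow> nat) \<Rightarrow> nat \<Rightarrow> nat list" where
  "adv \<tau> 0 = [0]"
| "adv \<tau> (Suc m) = adv \<tau> m @ [if \<tau> (adv \<tau> m) = 0 then 1 else 0]"

definition adva :: "(nat list \<Rightarrow> nat) \<Rightarrow> nat \<Rightarrow> nat" where
  "adva \<tau> m = adv \<tau> m ! m"

lemma adv_len[simp]: "length (adv \<tau> m) = Suc m"
  by (induction m) auto

lemma adv_nth: "i \<le> m \<Longrightarrow> adv \<tau> m ! i = adv \<tau> i ! i"
proof (induction m)
  case 0 then show ?case by simp
next
  case (Suc m)
  show ?case
  proof (cases "i = Suc m")
    case False
    then have "i \<le> m" using Suc.prems by simp
    then show ?thesis using Suc.IH by (simp add: nth_append)
  qed simp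
qed

lemma adv_map: "map (adva \<tau>) [0..<Suc m] = adv \<tau> m"
proof (rule nth_equalityI)
  show "length (map (adva \<tau>) [0..<Suc m]) = length (adv \<tau> m)" by simp
  fix i assume "i < length (map (adva \<tau>) [0..<Suc m])"
  then have i: "i \<le> m" by simp
  have "map (adva \<tau>) [0..<Suc m] ! i = adva \<tau> i" using i by (simp del: upt_Suc)
  also have "\<dots> = adv \<tau> m ! i" unfolding adva_def using adv_nth[OF i] by simp
  finally show "map (adva \<tau>) [0..<Suc m] ! i = adv \<tau> m ! i" .
qed

lemma adva_Suc: "adva \<tau> (Suc m) = (if \<tau> (adv \<tau> m) = 0 then 1 else 0)"
  unfolding adva_def by (simp add: nth_append)

lemma adva_01: "adva \<tau> m \<in> {0,1}"
  by (cases m) (simp_all add: adva_Suc, simp add: adva_def)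

lemma out0: "outcome (fk 0) \<tau> (adva \<tau>) m = (adva \<tau> m, \<tau> (adv \<tau> m))"
  unfolding outcome_def pref0 adv_map by simp

lemma adv_cor: assumes "n > 0" "run (Aut n) (outcome (fk 0) \<tau> (adva \<tau>)) m = 0"
  shows "enat n \<le> Cor (Aut n) (outcome (fk 0) \<tau> (adva \<tau>)) (Suc m)"
proof -
  let ?w = "outcome (fk 0) \<tau> (adva \<tau>)"
  define b where "b = (if \<tau> (adv \<tau> m) = 0 then 0 else 1::nat)"
  have r1: "run (Aut n) ?w (Suc m) = n + b"
    using assms by (simp add: out0 Tr_def b_def)
  have r2: "run (Aut n) ?w (Suc (Suc m)) = n - 1"
    using r1 assms by (simp add: out0 Tr_def b_def adva_Suc)
  have ch: "run (Aut n) ?w (Suc (Suc m) + j) = n - 1 - j" if "j \<le> n - 1" for j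
    using chain[OF r2 _ that] assms by simp
  show ?thesis
  proof (rule Cor_ge)
    show "run (Aut n) ?w (Suc m) \<noteq> 0" using r1 assms by simp
    fix j assume j: "0 < j" "j < n"
    have "Suc m + j = Suc (Suc m) + (j - 1)" using j by simp
    then show "run (Aut n) ?w (Suc m + j) \<noteq> 0" using ch[of "j - 1"] j by simp
  qed
qed

lemma cost0_ge: assumes "n > 0" shows "enat n \<le> strat_cost (Aut n) (fk 0) {0,1} \<tau>"
proof -
  have "enat n \<le> limsup (Cor (Aut n) (outcome (fk 0) \<tau> (adva \<tau>)))"
  proof (rule limsup_ge)
    fix N obtain m where m: "m \<ge> N" "run (Aut n) (outcome (fk 0) \<tau> (adva \<tau>)) m = 0"
      using zero_often[OF assms] by blast
    then show "\<exists>m\<ge>N. enat n \<le> Cor (Aut n) (outcome (fk 0) \<tau> (adva \<tau>)) m"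
      using adv_cor[OF assms m(2)] by (intro exI[of _ "Suc m"]) auto
  qed
  moreover have "adva \<tau> \<in> {\<alpha>. \<forall>n. \<alpha> n \<in> {0,1}}" using adva_01 by blast
  ultimately show ?thesis unfolding strat_cost_def
    by (intro SUP_upper2[of "adva \<tau>"]) blast+
qed

theorem theorem5:
  fixes n :: nat
  assumes "n > 0"
  shows "\<exists>(SI :: nat set) (SO :: nat set) (A :: (nat, nat \<times> nat) pac).
    finite SI \<and> finite SO \<and> finitary_buchi A \<and> alph A = SI \<times> SO \<and>
    card (states A) = n + 2 \<and>
    (\<exists>\<tau>. optimal A (fk 0) SI SO \<tau> \<and> strat_cost A (fk 0) SI \<tau> = enat n) \<and>
    (\<exists>\<tau>. optimal A (fk 1) SI SO \<tau> \<and> strat_cost A (fk 1) SI \<tau> = 1)"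
proof (intro exI conjI)
  show "finite {0,1::nat}" by simp
  show "finite {0,1::nat}" by simp
  show "alph (Aut n) = {0,1} \<times> {0,1}" by simp
  show "card (states (Aut n)) = n + 2" by simp
  have tr: "Tr n q a \<in> {0..n+1}" if "q \<in> {0..n+1}" for q a
    using that assms unfolding Tr_def by auto
  show "finitary_buchi (Aut n)"
    unfolding finitary_buchi_def wf_pac_def col_img using tr by simp
  define t0 where "t0 = (\<lambda>_::nat list. 0::nat)"
  have s0: "strategy {0,1} {0,1} t0" unfolding strategy_def t0_def by simp
  have c0: "strat_cost (Aut n) (fk 0) {0,1} t0 = enat n"
    using cost_le_n[OF assms] cost0_ge[OF assms] by (rule antisym)
  show "strat_cost (Aut n) (fk 0) {0,1} t0 = enat n" by (rule c0)
  show "optimal (Aut n) (fk 0) {0,1} {0,1} t0"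
    unfolding optimal_def using winning_all[OF assms s0] c0 cost0_ge[OF assms] by simp
  show "strat_cost (Aut n) (fk 1) {0,1} tau1 = 1" by (rule cost1[OF assms])
  show "optimal (Aut n) (fk 1) {0,1} {0,1} tau1"
    unfolding optimal_def using winning_all[OF assms tau1_strat] cost1[OF assms] cost_ge1[OF assms] by simp
qed

end
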